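(* Let $S=(X,X_0,X_S,U,\rightarrow,Y,H)$ be a finite metric system with metric $\mathbf{d}$ on $Y$, let $\delta\geq 0$, and let $S_I=(X_I,X_{I0},U,\rightarrow_I)$ be its $\delta$-approximate initial-state estimator. Then $S$ is $\delta$-approximate initial-state opaque if and only if for all $(x,q)\in X_I$: $x\in X_0\cap X_S$ implies $q\cap X_0\not\subseteq X_S$.
   Context: A system is a tuple $S=(X,X_0,X_S,U,\rightarrow,Y,H)$ with state set $X$, initial states $X_0\subseteq X$, secret states $X_S\subseteq X$, inputs $U$, transition relation $\rightarrow\subseteq X\times U\times X$ (write $x\xrightarrow{u}x'$), outputs $Y$ and output map $H:X\to Y$; it is metric if $Y$ has a metric $\mathbf{d}$, and finite if $X$ and $U$ are finite. A finite run is $x_0\xrightarrow{u_1}x_1\cdots\xrightarrow{u_n}x_n$ with each step a transition and $x_0\in X_0$ (when so stated). $S$ is $\delta$-approximate initial-state opaque if for every $x_0\in X_0\cap X_S$ and every finite run $x_0\xrightarrow{u_1}x_1\cdots\xrightarrow{u_n}x_n$ there exist $x_0'\in X_0\setminus X_S$ and a finite run $x_0'\xrightarrow{u_1'}x_1'\cdots\xrightarrow{u_n'}x_n'$ (inputs arbitrary) with $\max_{0\le i\le n}\mathbf{d}(H(x_i),H(x_i'))\leq\delta$. With $\mathbf{Pre}_u(x)=\{x'':x''\xrightarrow{u}x\}$ and $\mathbf{Pre}_u(q)=\bigcup_{x\in q}\mathbf{Pre}_u(x)$, the $\delta$-approximate initial-state estimator is $S_I=(X_I,X_{I0},U,\rightarrow_I)$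 with $X_{I0}=\{(x,q)\in X\times 2^X: q=\{x'\in X:\mathbf{d}(H(x),H(x'))\leq\delta\}\}$, and $(x,q)\xrightarrow{u}_I(x',q')$ iff $(x',u,x)\in\rightarrow$ and $q'=\bigcup_{\hat u\in U}\mathbf{Pre}_{\hat u}(q)\cap\{x''\in X:\mathbf{d}(H(x'),H(x''))\leq\delta\}$; $X_I$ is the set of states reachable from $X_{I0}$. *)

theory Defs
  imports Main "HOL-Analysis.Analysis"
begin

text \<open>A system S = (X, X0, XS, U, T, Y, H): states X, initial states X0, secret states XS,
  inputs U, transition relation T (triples (x,u,x') meaning x --u--> x'), output map H.
  The output set Y is the (metric) type 'y with metric dist.\<close>

definition finite_metric_system ::
  "'x set \<Rightarrow> 'x set \<Rightarrow> 'x set \<Rightarrow> 'u set \<Rightarrow> ('x \<times> 'u \<times> 'x) set \<Rightarrow> ('x \<Rightarrow> 'y::metric_space) \<Rightarrow> bool" where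
  "finite_metric_system X X0 XS U T H \<longleftrightarrow>
     finite X \<and> finite U \<and> X0 \<subseteq> X \<and> XS \<subseteq> X \<and> T \<subseteq> X \<times> U \<times> X"

text \<open>A finite run of length n: states xs 0, ..., xs n and inputs us 1, ..., us n with
  xs (i) --us (i+1)--> xs (i+1).\<close>
definition is_run :: "('x \<times> 'u \<times> 'x) set \<Rightarrow> nat \<Rightarrow> (nat \<Rightarrow> 'x) \<Rightarrow> (nat \<Rightarrow> 'u) \<Rightarrow> bool" where
  "is_run T n xs us \<longleftrightarrow> (\<forall>i<n. (xs i, us (Suc i), xs (Suc i)) \<in> T)"

definition approx_init_state_opaque ::
  "'x set \<Rightarrow> 'x set \<Rightarrow> 'x set \<Rightarrow> 'u set \<Rightarrow> ('x \<times> 'u \<times> 'x) set \<Rightarrow> ('x \<Rightarrow> 'y::metric_space) \<Rightarrow> real \<Rightarrow> bool" where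
  "approx_init_state_opaque X X0 XS U T H \<delta> \<longleftrightarrow>
     (\<forall>n xs us. xs 0 \<in> X0 \<inter> XS \<and> is_run T n xs us \<longrightarrow>
        (\<exists>xs' us'. xs' 0 \<in> X0 - XS \<and> is_run T n xs' us' \<and>
           (\<forall>i\<le>n. dist (H (xs i)) (H (xs' i)) \<le> \<delta>)))"

definition Pre :: "('x \<times> 'u \<times> 'x) set \<Rightarrow> 'u \<Rightarrow> 'x set \<Rightarrow> 'x set" where
  "Pre T u q = {x''. \<exists>x\<in>q. (x'', u, x) \<in> T}"

definition nbhd :: "'x set \<Rightarrow> ('x \<Rightarrow> 'y::metric_space) \<Rightarrow> real \<Rightarrow> 'x \<Rightarrow> 'x set" where
  "nbhd X H \<delta> x = {x'' \<in> X. dist (H x) (H x'') \<le> \<delta>}"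

definition est_init :: "'x set \<Rightarrow> ('x \<Rightarrow> 'y::metric_space) \<Rightarrow> real \<Rightarrow> ('x \<times> 'x set) set" where
  "est_init X H \<delta> = {(x, q). x \<in> X \<and> q = nbhd X H \<delta> x}"

definition est_trans ::
  "'x set \<Rightarrow> 'u set \<Rightarrow> ('x \<times> 'u \<times> 'x) set \<Rightarrow> ('x \<Rightarrow> 'y::metric_space) \<Rightarrow> real
   \<Rightarrow> ('x \<times> 'x set) \<Rightarrow> 'u \<Rightarrow> ('x \<times> 'x set) \<Rightarrow> bool" where
  "est_trans X U T H \<delta> s u s' \<longleftrightarrow>
     (case s of (x, q) \<Rightarrow> case s' of (x', q') \<Rightarrow>
        (x', u, x) \<in> T \<and> q' = (\<Union>u'\<in>U. Pre T u' q) \<inter> nbhd X H \<delta> x')"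

inductive_set est_reach ::
  "'x set \<Rightarrow> 'u set \<Rightarrow> ('x \<times> 'u \<times> 'x) set \<Rightarrow> ('x \<Rightarrow> 'y::metric_space) \<Rightarrow> real \<Rightarrow> ('x \<times> 'x set) set"
  for X U T H \<delta> where
  init: "s \<in> est_init X H \<delta> \<Longrightarrow> s \<in> est_reach X U T H \<delta>"
| step: "s \<in> est_reach X U T H \<delta> \<Longrightarrow> est_trans X U T H \<delta> s u s' \<Longrightarrow> s' \<in> est_reach X U T H \<delta>"

end

theory Submission
  imports Defs
begin

definition QQ :: "'x set \<Rightarrow> ('x \<times> 'u \<times> 'x) set \<Rightarrow> ('x \<Rightarrow> 'y::metric_space) \<Rightarrow> real \<Rightarrow> nat \<Rightarrow> (nat \<Rightarrow> 'x) \<Rightarrow> 'x set" where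
  "QQ X T H \<delta> n xs = {y. \<exists>ys vs. ys 0 = y \<and> is_run T n ys vs \<and>
      (\<forall>i\<le>n. ys i \<in> X \<and> dist (H (xs i)) (H (ys i)) \<le> \<delta>)}"

lemma QQ0: "QQ X T H \<delta> 0 xs = nbhd X H \<delta> (xs 0)"
  unfolding QQ_def nbhd_def is_run_def
  by (auto intro!: exI[of _ "\<lambda>_. _"])

lemma QQSuc:
  assumes TT: "T \<subseteq> X \<times> U \<times> X"
  shows "QQ X T H \<delta> (Suc n) xs =
     (\<Union>u\<in>U. Pre T u (QQ X T H \<delta> n (\<lambda>i. xs (Suc i)))) \<inter> nbhd X H \<delta> (xs 0)"
proof (intro equalityI subsetI)
  fix y assume "y \<in> QQ X T H \<delta> (Suc n) xs"
  then obtain ys vs where y: "ys 0 = y" and r: "is_run T (Suc n) ys vs"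
    and d: "\<forall>i\<le>Suc n. ys i \<in> X \<and> dist (H (xs i)) (H (ys i)) \<le> \<delta>"
    unfolding QQ_def by blast
  have t0: "(ys 0, vs 1, ys 1) \<in> T" using r unfolding is_run_def by auto
  hence u: "vs 1 \<in> U" using TT by auto
  have "is_run T n (\<lambda>i. ys (Suc i)) (\<lambda>i. vs (Suc i))" using r unfolding is_run_def by auto
  moreover have "\<forall>i\<le>n. ys (Suc i) \<in> X \<and> dist (H (xs (Suc i))) (H (ys (Suc i))) \<le> \<delta>"
    using d by auto
  ultimately have "ys 1 \<in> QQ X T H \<delta> n (\<lambda>i. xs (Suc i))" unfolding QQ_def by auto
  hence "y \<in> Pre T (vs 1) (QQ X T H \<delta> n (\<lambda>i. xs (Suc i)))" using t0 y unfolding Pre_def by auto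
  moreover have "y \<in> nbhd X H \<delta> (xs 0)" using d y unfolding nbhd_def by auto
  ultimately show "y \<in> (\<Union>u\<in>U. Pre T u (QQ X T H \<delta> n (\<lambda>i. xs (Suc i)))) \<inter> nbhd X H \<delta> (xs 0)"
    using u by auto
next
  fix y assume "y \<in> (\<Union>u\<in>U. Pre T u (QQ X T H \<delta> n (\<lambda>i. xs (Suc i)))) \<inter> nbhd X H \<delta> (xs 0)"
  then obtain u z where yz: "(y, u, z) \<in> T" and z: "z \<in> QQ X T H \<delta> n (\<lambda>i. xs (Suc i))"
    and yn: "y \<in> nbhd X H \<delta> (xs 0)"
    unfolding Pre_def by auto
  then obtain ys vs where z0: "ys 0 = z" and r: "is_run T n ys vs"
    and d: "\<forall>i\<le>n. ys i \<in> X \<and> dist (H (xs (Suc i))) (H (ys i)) \<le> \<delta>"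
    unfolding QQ_def by blast
  define ys' where "ys' i = (if i = 0 then y else ys (i - 1))" for i
  define vs' where "vs' i = (if i = 1 then u else vs (i - 1))" for i
  have "is_run T (Suc n) ys' vs'"
    unfolding is_run_def
  proof (intro allI impI)
    fix i assume "i < Suc n"
    show "(ys' i, vs' (Suc i), ys' (Suc i)) \<in> T"
    proof (cases i)
      case 0 then show ?thesis using yz z0 by (simp add: ys'_def vs'_def)
    next
      case (Suc j) then show ?thesis using r \<open>i < Suc n\<close> unfolding is_run_def
        by (simp add: ys'_def vs'_def)
    qed
  qed
  moreover have "\<forall>i\<le>Suc n. ys' i \<in> X \<and> dist (H (xs i)) (H (ys' i)) \<le> \<delta>"
  proof (intro allI impI)
    fix i assume "i \<le> Suc n"
    show "ys' i \<in> X \<and> dist (H (xs i)) (H (ys' i)) \<le> \<delta>"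
    proof (cases i)
      case 0 then show ?thesis using yn by (simp add: ys'_def nbhd_def)
    next
      case (Suc j) then show ?thesis using d \<open>i \<le> Suc n\<close> by (simp add: ys'_def)
    qed
  qed
  ultimately show "y \<in> QQ X T H \<delta> (Suc n) xs" unfolding QQ_def
    by (intro CollectI exI[of _ ys'] exI[of _ vs']) (simp add: ys'_def)
qed

lemma reach_char:
  assumes TT: "T \<subseteq> X \<times> U \<times> X"
  shows "s \<in> est_reach X U T H \<delta> \<Longrightarrow> \<exists>n xs us. is_run T n xs us \<and> xs 0 = fst s \<and>
     (\<forall>i\<le>n. xs i \<in> X) \<and> snd s = QQ X T H \<delta> n xs"
proof (induction rule: est_reach.induct)
  case (init s)
  then show ?case unfolding est_init_def
    by (intro exI[of _ 0] exI[of _ "\<lambda>_. fst s"]) (auto simp: is_run_def QQ0)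
next
  case (step s u s')
  then obtain n xs us where r: "is_run T n xs us" and x0: "xs 0 = fst s"
    and X: "\<forall>i\<le>n. xs i \<in> X" and q: "snd s = QQ X T H \<delta> n xs" by blast
  obtain x q x' q' where ss: "s = (x, q)" "s' = (x', q')" by (cases s, cases s')
  have t: "(x', u, x) \<in> T" and q': "q' = (\<Union>u'\<in>U. Pre T u' q) \<inter> nbhd X H \<delta> x'"
    using step.hyps(2) unfolding est_trans_def ss by auto
  define xs' where "xs' i = (if i = 0 then x' else xs (i - 1))" for i
  define us' where "us' i = (if i = 1 then u else us (i - 1))" for i
  have "is_run T (Suc n) xs' us'"
    unfolding is_run_def
  proof (intro allI impI)
    fix i assume "i < Suc n"
    show "(xs' i, us' (Suc i), xs' (Suc i)) \<in> T"
    proof (cases i)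
      case 0 then show ?thesis using t x0 ss by (simp add: xs'_def us'_def)
    next
      case (Suc j) then show ?thesis using r \<open>i < Suc n\<close> unfolding is_run_def
        by (simp add: xs'_def us'_def)
    qed
  qed
  moreover have "\<forall>i\<le>Suc n. xs' i \<in> X"
    using X t TT by (auto simp: xs'_def)
  moreover have "(\<lambda>i. xs' (Suc i)) = xs" by (simp add: xs'_def)
  hence "QQ X T H \<delta> (Suc n) xs' = q'"
    using QQSuc[OF TT, of H \<delta> n xs'] q' q ss by (simp add: xs'_def)
  moreover have "xs' 0 = x'" by (simp add: xs'_def)
  ultimately show ?case using ss
    by (intro exI[of _ "Suc n"] exI[of _ xs'] exI[of _ us']) simp
qed

lemma run_reach:
  assumes TT: "T \<subseteq> X \<times> U \<times> X"
  shows "is_run T n xs us \<Longrightarrow> (\<forall>i\<le>n. xs i \<in> X) \<Longrightarrow>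
     (xs 0, QQ X T H \<delta> n xs) \<in> est_reach X U T H \<delta>"
proof (induction n arbitrary: xs us)
  case 0
  then show ?case by (intro est_reach.init) (auto simp: est_init_def QQ0)
next
  case (Suc n)
  have "is_run T n (\<lambda>i. xs (Suc i)) (\<lambda>i. us (Suc i))" using Suc.prems unfolding is_run_def by auto
  moreover have "\<forall>i\<le>n. xs (Suc i) \<in> X" using Suc.prems by auto
  ultimately have R: "(xs 1, QQ X T H \<delta> n (\<lambda>i. xs (Suc i))) \<in> est_reach X U T H \<delta>"
    using Suc.IH by fastforce
  have t: "(xs 0, us 1, xs 1) \<in> T" using Suc.prems unfolding is_run_def by auto
  show ?case
    using t by (intro est_reach.step[OF R, of "us 1"])
       (simp add: est_trans_def QQSuc[OF TT])
qed

theorem mainTheorem2: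
  fixes X X0 XS :: "'x set" and U :: "'u set" and T :: "('x \<times> 'u \<times> 'x) set"
    and H :: "'x \<Rightarrow> 'y::metric_space" and \<delta> :: real
  assumes "finite_metric_system X X0 XS U T H"
    and "\<delta> \<ge> 0"
  shows "approx_init_state_opaque X X0 XS U T H \<delta> \<longleftrightarrow>
    (\<forall>(x, q) \<in> est_reach X U T H \<delta>. x \<in> X0 \<inter> XS \<longrightarrow> \<not> (q \<inter> X0 \<subseteq> XS))"
proof -
  have TT: "T \<subseteq> X \<times> U \<times> X" and X0: "X0 \<subseteq> X"
    using assms(1) unfolding finite_metric_system_def by auto
  have runX: "\<forall>i\<le>n. xs i \<in> X" if "is_run T n xs us" "xs 0 \<in> X" for n xs us
  proof (intro allI impI)
    fix i assume "i \<le> n"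
    show "xs i \<in> X"
    proof (cases i)
      case 0 then show ?thesis using that by simp
    next
      case (Suc j) then show ?thesis using that \<open>i \<le> n\<close> TT unfolding is_run_def
        by (metis (no_types, lifting) Suc_le_lessD mem_Sigma_iff subsetD)
    qed
  qed
  show ?thesis
  proof
    assume op: "approx_init_state_opaque X X0 XS U T H \<delta>"
    show "\<forall>(x, q) \<in> est_reach X U T H \<delta>. x \<in> X0 \<inter> XS \<longrightarrow> \<not> (q \<inter> X0 \<subseteq> XS)"
    proof (clarify)
      fix x q assume R: "(x, q) \<in> est_reach X U T H \<delta>" and x: "x \<in> X0" "x \<in> XS"
        and sub: "q \<inter> X0 \<subseteq> XS"
      obtain n xs us where r: "is_run T n xs us" and x0: "xs 0 = x" and q: "q = QQ X T H \<delta> n xs"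
        using reach_char[OF TT R] by auto
      obtain xs' us' where a: "xs' 0 \<in> X0 - XS" and r': "is_run T n xs' us'"
        and d: "\<forall>i\<le>n. dist (H (xs i)) (H (xs' i)) \<le> \<delta>"
        using op r x x0 unfolding approx_init_state_opaque_def by blast
      have "\<forall>i\<le>n. xs' i \<in> X" using runX[OF r'] a X0 by auto
      hence "xs' 0 \<in> q" using q r' d unfolding QQ_def by blast
      then show False using sub a by auto
    qed
  next
    assume C: "\<forall>(x, q) \<in> est_reach X U T H \<delta>. x \<in> X0 \<inter> XS \<longrightarrow> \<not> (q \<inter> X0 \<subseteq> XS)"
    show "approx_init_state_opaque X X0 XS U T H \<delta>"
      unfolding approx_init_state_opaque_def
    proof (intro allI impI, elim conjE)
      fix n xs us assume x0: "xs 0 \<in> X0 \<inter> XS" and r: "is_run T n xs us"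
      have "\<forall>i\<le>n. xs i \<in> X" using runX[OF r] x0 X0 by auto
      hence R: "(xs 0, QQ X T H \<delta> n xs) \<in> est_reach X U T H \<delta>" using run_reach[OF TT r] by blast
      then obtain y where "y \<in> QQ X T H \<delta> n xs" "y \<in> X0" "y \<notin> XS" using C x0 by blast
      then show "\<exists>xs' us'. xs' 0 \<in> X0 - XS \<and> is_run T n xs' us' \<and>
           (\<forall>i\<le>n. dist (H (xs i)) (H (xs' i)) \<le> \<delta>)"
        unfolding QQ_def by blast
    qed
  qed
qed

end
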